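(* Let $K$ be a Cantor set with metric $d$. For every endomorphism $T:K\to K$ and every $\varepsilon>0$ there exists an endomorphism $\widetilde T:K\to K$ such that $D(T,\widetilde T)=\max_{x\in K} d(T(x),\widetilde T(x))<\varepsilon$ and the orbit of every point of $K$ under $\widetilde T$ is finally periodic.
   Context: A Cantor set is a nonempty totally disconnected, perfect, compact metric space. An endomorphism of $K$ is a continuous surjection $K\to K$. The orbit of $x\in K$ under a map $S$ is finally periodic if there exist integers $j,N>0$ with $S^{N+j}(x)=S^{j}(x)$. *)

theory Defs
  imports "HOL-Analysis.Analysis"
begin

definition totally_disconnected_set :: "'a::topological_space set \<Rightarrow> bool" where
  "totally_disconnected_set K \<longleftrightarrow> (\<forall>C. C \<subseteq> K \<and> connected C \<longrightarrow> (\<exists>a. C \<subseteq> {a}))"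

definition perfect_set :: "'a::topological_space set \<Rightarrow> bool" where
  "perfect_set K \<longleftrightarrow> closed K \<and> (\<forall>x\<in>K. x islimpt K)"

definition cantor_set :: "'a::metric_space set \<Rightarrow> bool" where
  "cantor_set K \<longleftrightarrow> K \<noteq> {} \<and> totally_disconnected_set K \<and> perfect_set K \<and> compact K"

definition endomorphism :: "'a::topological_space set \<Rightarrow> ('a \<Rightarrow> 'a) \<Rightarrow> bool" where
  "endomorphism K T \<longleftrightarrow> continuous_on K T \<and> T ` K = K"

definition finally_periodic :: "('a \<Rightarrow> 'a) \<Rightarrow> 'a \<Rightarrow> bool" where
  "finally_periodic S x \<longleftrightarrow> (\<exists>j N::nat. j > 0 \<and> N > 0 \<and> (S ^^ (N + j)) x = (S ^^ j) x)"

end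

theory Submission
  imports Defs
begin


lemma clopen_nbhd:
  fixes K :: "'a::metric_space set"
  assumes K: "compact K" "totally_disconnected_set K" and x: "x \<in> K" and U: "open U" "x \<in> U"
  shows "\<exists>C. openin (top_of_set K) C \<and> closedin (top_of_set K) C \<and> x \<in> C \<and> C \<subseteq> U"
proof -
  let ?X = "top_of_set K"
  have cs: "compact_space ?X" using K(1) by (simp add: compact_space_subtopology)
  have hs: "Hausdorff_space ?X" by (simp add: Hausdorff_space_subtopology)
  have q: "quasi_component_of ?X x = connected_component_of ?X x"
    by (intro quasi_eq_connected_component_of) (simp add: cs hs)
  have "connectedin ?X (connected_component_of_set ?X x)"
    by (simp add: connectedin_connected_component_of)
  then have "connected (connected_component_of_set ?X x)" "connected_component_of_set ?X x \<subseteq> K"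
    by (auto simp: connectedin_subtopology)
  then obtain a where "connected_component_of_set ?X x \<subseteq> {a}"
    using K(2) unfolding totally_disconnected_set_def by blast
  moreover have "x \<in> connected_component_of_set ?X x"
    using x by (simp add: connected_component_of_refl)
  ultimately have cc: "connected_component_of_set ?X x = {x}" by blast
  have qc: "{x} \<in> quasi_components_of ?X"
    unfolding quasi_components_of_def using q cc x by (intro image_eqI[of _ _ x]) auto
  have "closedin ?X (K \<inter> - U)"
    using U(1) by (intro closedin_closed_Int) auto
  then have comp: "compactin ?X (K - U)"
    using cs by (simp add: Diff_eq closedin_compact_space)
  have "separated_between ?X {x} (K - U)"
    using separated_between_quasi_component_compact[OF qc comp] U(2) by (simp add: disjnt_def)
  then obtain A B where AB: "openin ?X A" "openin ?X B" "A \<union> B = K" "disjnt A B" "{x} \<subseteq> A" "K - U \<subseteq> B"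
    unfolding separated_between_def by auto
  have "A = K - B" using AB by (auto simp: disjnt_def)
  then have "closedin ?X A"
    using AB(2) by (simp add: closedin_diff)
  moreover have "A \<subseteq> U" using AB by (auto simp: disjnt_def)
  ultimately show ?thesis using AB by blast
qed




definition clo :: "'a::topological_space set \<Rightarrow> 'a set \<Rightarrow> bool" where
  "clo K C \<longleftrightarrow> openin (top_of_set K) C \<and> closedin (top_of_set K) C"

lemma clo_sub: "clo K C \<Longrightarrow> C \<subseteq> K"
  by (auto simp: clo_def dest: openin_imp_subset)

lemma clo_Diff: "clo K A \<Longrightarrow> clo K B \<Longrightarrow> clo K (A - B)"
  by (simp add: clo_def openin_diff closedin_diff)

lemma clo_Int: "clo K A \<Longrightarrow> clo K B \<Longrightarrow> clo K (A \<inter> B)"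
  by (simp add: clo_def openin_Int closedin_Int)

lemma clo_closed: "clo K C \<Longrightarrow> closed K \<Longrightarrow> closed C"
  by (simp add: clo_def closedin_closed_eq)

lemma split2:
  fixes K :: "'a::metric_space set"
  assumes K: "compact K" "totally_disconnected_set K" "perfect_set K"
    and P: "clo K P" "P \<noteq> {}"
  shows "\<exists>A. clo K A \<and> A \<noteq> {} \<and> A \<subseteq> P \<and> P - A \<noteq> {}"
proof -
  obtain x where x: "x \<in> P" using P by blast
  obtain W where O: "open W" "P = K \<inter> W" using P unfolding clo_def by (auto simp: openin_open)
  have xK: "x \<in> K" "x \<in> W" using x O by auto
  have "x islimpt K" using K(3) xK unfolding perfect_set_def by blast
  then obtain y where y: "y \<in> K" "y \<in> W" "y \<noteq> x"
    using O(1) xK(2) unfolding islimpt_def by blast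
  obtain C where C: "openin (top_of_set K) C" "closedin (top_of_set K) C" "x \<in> C" "C \<subseteq> W - {y}"
    using clopen_nbhd[OF K(1,2) xK(1), of "W - {y}"] O(1) xK y by auto
  have "C \<subseteq> K" using C(1) by (simp add: openin_imp_subset)
  then show ?thesis
    using C O y by (intro exI[of _ C]) (auto simp: clo_def)
qed




lemma split_n:
  fixes K :: "'a::metric_space set"
  assumes K: "compact K" "totally_disconnected_set K" "perfect_set K"
  shows "clo K P \<Longrightarrow> P \<noteq> {} \<Longrightarrow> (m::nat) > 0 \<Longrightarrow> \<exists>c. (\<forall>i<m. clo K (c i) \<and> c i \<noteq> {}) \<and>
     (\<forall>i<m. \<forall>j<m. i \<noteq> j \<longrightarrow> c i \<inter> c j = {}) \<and> (\<Union>i<m. c i) = P"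
proof (induction m arbitrary: P)
  case 0
  then show ?case by simp
next
  case (Suc m)
  show ?case
  proof (cases "m = 0")
    case True
    then show ?thesis using Suc.prems by (intro exI[of _ "\<lambda>_. P"]) auto
  next
    case False
    obtain A where A: "clo K A" "A \<noteq> {}" "A \<subseteq> P" "P - A \<noteq> {}"
      using split2[OF K Suc.prems(1,2)] by blast
    have "clo K (P - A)" using A Suc.prems by (simp add: clo_Diff)
    then obtain c where c: "\<forall>i<m. clo K (c i) \<and> c i \<noteq> {}"
       "\<forall>i<m. \<forall>j<m. i \<noteq> j \<longrightarrow> c i \<inter> c j = {}" "(\<Union>i<m. c i) = P - A"
      using Suc.IH[of "P - A"] A False by auto
    let ?c = "c(m := A)"
    have "(\<Union>i<Suc m. ?c i) = A \<union> (\<Union>i<m. c i)"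
      by (auto simp: lessThan_Suc)
    also have "\<dots> = P" using c(3) A by auto
    finally have u: "(\<Union>i<Suc m. ?c i) = P" .
    have d: "c i \<inter> A = {}" if "i < m" for i
      using c(3) that by auto
    show ?thesis
      apply (intro exI[of _ ?c] conjI)
      using c A d u by (auto simp: less_Suc_eq)
  qed
qed




lemma disjointify:
  fixes K :: "'a::topological_space set"
  assumes "finite F" "\<forall>A\<in>F. clo K A"
  shows "\<exists>\<P>. finite \<P> \<and> \<Union>\<P> = \<Union>F \<and> (\<forall>P\<in>\<P>. clo K P \<and> P \<noteq> {} \<and> (\<exists>A\<in>F. P \<subseteq> A))
     \<and> (\<forall>P\<in>\<P>. \<forall>Q\<in>\<P>. P \<noteq> Q \<longrightarrow> P \<inter> Q = {})"
  using assms
proof (induction F rule: finite_induct)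
  case empty
  then show ?case by (intro exI[of _ "{}"]) auto
next
  case (insert A F)
  then obtain \<P> where P: "finite \<P>" "\<Union>\<P> = \<Union>F" "\<forall>P\<in>\<P>. clo K P \<and> P \<noteq> {} \<and> (\<exists>A\<in>F. P \<subseteq> A)"
     "\<forall>P\<in>\<P>. \<forall>Q\<in>\<P>. P \<noteq> Q \<longrightarrow> P \<inter> Q = {}" by auto
  let ?Q = "(insert A ((\<lambda>P. P - A) ` \<P>)) - {{}}"
  have "finite ?Q" using P by auto
  moreover have "\<Union>?Q = \<Union>(insert A F)"
  proof -
    have "\<Union>?Q = A \<union> \<Union>((\<lambda>P. P - A) ` \<P>)" by blast
    also have "\<dots> = A \<union> \<Union>\<P>" by blast
    finally show ?thesis using P(2) by simp
  qed
  moreover have "\<forall>P\<in>?Q. clo K P \<and> P \<noteq> {} \<and> (\<exists>B\<in>insert A F. P \<subseteq> B)"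
  proof
    fix X assume X: "X \<in> ?Q"
    show "clo K X \<and> X \<noteq> {} \<and> (\<exists>B\<in>insert A F. X \<subseteq> B)"
    proof (cases "X = A")
      case True
      then show ?thesis using X insert.prems by auto
    next
      case False
      then obtain Y where Y: "Y \<in> \<P>" "X = Y - A" "X \<noteq> {}" using X by auto
      then obtain B where "B \<in> F" "Y \<subseteq> B" "clo K Y" using P(3) by blast
      then show ?thesis using Y insert.prems by (auto intro!: clo_Diff)
    qed
  qed
  moreover have "\<forall>P\<in>?Q. \<forall>Q\<in>?Q. P \<noteq> Q \<longrightarrow> P \<inter> Q = {}"
  proof (intro ballI impI)
    fix X Y assume "X \<in> ?Q" "Y \<in> ?Q" "X \<noteq> Y"
    then show "X \<inter> Y = {}" using P(4) by auto
  qed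
  ultimately show ?case by blast
qed




lemma partition_small:
  fixes K :: "'a::metric_space set"
  assumes K: "compact K" "totally_disconnected_set K" and d: "\<delta> > 0"
  shows "\<exists>\<U>. finite \<U> \<and> \<Union>\<U> = K \<and> (\<forall>U\<in>\<U>. clo K U \<and> U \<noteq> {} \<and> (\<forall>x\<in>U. \<forall>y\<in>U. dist x y < \<delta>))
     \<and> (\<forall>U\<in>\<U>. \<forall>V\<in>\<U>. U \<noteq> V \<longrightarrow> U \<inter> V = {})"
proof -
  have "\<forall>x\<in>K. \<exists>C. clo K C \<and> x \<in> C \<and> C \<subseteq> ball x (\<delta>/2)"
  proof
    fix x assume x: "x \<in> K"
    show "\<exists>C. clo K C \<and> x \<in> C \<and> C \<subseteq> ball x (\<delta>/2)"
      using clopen_nbhd[OF K x, of "ball x (\<delta>/2)"] d unfolding clo_def by auto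
  qed
  then obtain C where C: "\<And>x. x \<in> K \<Longrightarrow> clo K (C x) \<and> x \<in> C x \<and> C x \<subseteq> ball x (\<delta>/2)"
    by (auto dest!: bchoice)
  have "\<forall>x\<in>K. \<exists>W. open W \<and> C x = K \<inter> W"
    using C unfolding clo_def by (simp add: openin_open)
  then obtain Op where O: "\<And>x. x \<in> K \<Longrightarrow> open (Op x) \<and> C x = K \<inter> Op x"
    by (auto dest!: bchoice)
  have "K \<subseteq> (\<Union>x\<in>K. Op x)" using C O by blast
  then obtain F where F: "F \<subseteq> K" "finite F" "K \<subseteq> (\<Union>x\<in>F. Op x)"
    using compactE_image[OF K(1), of K Op] O by blast
  have U: "\<Union>(C ` F) = K"
  proof
    show "\<Union>(C ` F) \<subseteq> K" using F C clo_sub by blast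
    show "K \<subseteq> \<Union>(C ` F)"
    proof
      fix x assume x: "x \<in> K"
      then obtain z where z: "z \<in> F" "x \<in> Op z" using F(3) by blast
      then have "x \<in> C z" using O[of z] F(1) x by blast
      then show "x \<in> \<Union>(C ` F)" using z by blast
    qed
  qed
  obtain \<P> where P: "finite \<P>" "\<Union>\<P> = \<Union>(C ` F)" "\<forall>P\<in>\<P>. clo K P \<and> P \<noteq> {} \<and> (\<exists>A\<in>C ` F. P \<subseteq> A)"
     "\<forall>P\<in>\<P>. \<forall>Q\<in>\<P>. P \<noteq> Q \<longrightarrow> P \<inter> Q = {}"
  proof -
    have fin: "finite (C ` F)" using F by auto
    have cl: "\<forall>A\<in>C ` F. clo K A" using F C by blast
    from disjointify[OF fin cl] show ?thesis
      apply (elim exE conjE) apply (rule that) apply assumption+ done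
  qed
  have "\<forall>x\<in>P. \<forall>y\<in>P. dist x y < \<delta>" if "P \<in> \<P>" for P
  proof -
    have "\<exists>A\<in>C ` F. P \<subseteq> A" using P(3) that by simp
    then obtain z where z: "z \<in> F" "P \<subseteq> C z" by auto
    have "P \<subseteq> ball z (\<delta>/2)" using C[of z] F(1) z by blast
    show ?thesis
    proof (intro ballI)
      fix x y assume "x \<in> P" "y \<in> P"
      then have "dist z x < \<delta>/2" "dist z y < \<delta>/2" using \<open>P \<subseteq> ball z (\<delta>/2)\<close> by auto
      then show "dist x y < \<delta>" using dist_triangle[of x y z] dist_commute[of x z] by linarith
    qed
  qed
  then show ?thesis using P U by (intro exI[of _ \<P>]) auto
qed





lemma dist_geom_bound:
  fixes f :: "nat \<Rightarrow> 'a::metric_space"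
  assumes "\<And>k. dist (f k) (f (Suc k)) \<le> (1/2::real)^k"
  shows "dist (f k) (f (k + m)) \<le> 2 * (1/2::real)^k - 2 * (1/2)^(k+m)"
proof (induction m)
  case 0
  then show ?case by simp
next
  case (Suc m)
  have "dist (f k) (f (k + Suc m)) \<le> dist (f k) (f (k + m)) + dist (f (k + m)) (f (Suc (k + m)))"
    using dist_triangle by simp
  also have "\<dots> \<le> 2 * (1/2::real)^k - 2 * (1/2)^(k+m) + (1/2)^(k+m)"
    using Suc assms[of "k+m"] by linarith
  also have "\<dots> = 2 * (1/2::real)^k - 2 * (1/2)^(k + Suc m)"
    by simp
  finally show ?case .
qed

lemma uniform_limit_surj:
  fixes f :: "nat \<Rightarrow> 'a::metric_space \<Rightarrow> 'a"
  assumes X: "compact X" and Y: "compact Y"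
    and fY: "\<And>k x. x \<in> X \<Longrightarrow> f k x \<in> Y"
    and fc: "\<And>k. continuous_on X (f k)"
    and step: "\<And>k x. x \<in> X \<Longrightarrow> dist (f k x) (f (Suc k) x) \<le> (1/2::real)^k"
    and dense: "\<And>k y. y \<in> Y \<Longrightarrow> \<exists>x\<in>X. dist (f k x) y \<le> (1/2::real)^k"
  shows "\<exists>g. continuous_on X g \<and> g ` X = Y"
proof -
  have bd: "dist (f k x) (f (k + m) x) \<le> 2 * (1/2::real)^k" if "x \<in> X" for x k m
  proof -
    have "dist (f k x) (f (k + m) x) \<le> 2 * (1/2::real)^k - 2 * (1/2)^(k+m)"
      using dist_geom_bound[of "\<lambda>k. f k x"] step[OF that] by blast
    moreover have "0 \<le> (1/2::real)^(k+m)" by simp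
    ultimately show ?thesis by linarith
  qed
  have small: "\<exists>M. 2 * (1/2::real)^M < e" if e: "e > 0" for e
  proof -
    obtain M where "(1/2::real)^M < e/2" using real_arch_pow_inv[of "e/2" "1/2::real"] e by auto
    then show ?thesis by (intro exI[of _ M]) linarith
  qed
  have pmono: "(1/2::real)^n \<le> (1/2)^M" if "M \<le> n" for M n
    using that by (simp add: power_decreasing)
  have conv: "\<exists>l\<in>Y. (\<lambda>k. f k x) \<longlonglongrightarrow> l" if x: "x \<in> X" for x
  proof -
    have "Cauchy (\<lambda>k. f k x)"
      unfolding Cauchy_def
    proof (intro allI impI)
      fix e :: real assume "e > 0"
      then obtain M where M: "2 * (1/2::real)^M < e/2" using small[of "e/2"] by auto
      show "\<exists>M. \<forall>m\<ge>M. \<forall>n\<ge>M. dist (f m x) (f n x) < e"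
      proof (intro exI[of _ M] allI impI)
        fix m n assume mn: "M \<le> m" "M \<le> n"
        have "dist (f M x) (f m x) \<le> 2 * (1/2::real)^M"
          using bd[OF x, of M "m - M"] mn by simp
        moreover have "dist (f M x) (f n x) \<le> 2 * (1/2::real)^M"
          using bd[OF x, of M "n - M"] mn by simp
        moreover have "dist (f m x) (f n x) \<le> dist (f M x) (f m x) + dist (f M x) (f n x)"
          by (rule dist_triangle3)
        ultimately show "dist (f m x) (f n x) < e" using M by linarith
      qed
    qed
    moreover have "complete Y" using Y by (rule compact_imp_complete)
    moreover have "\<forall>n. f n x \<in> Y" using fY[OF x] by blast
    ultimately show ?thesis unfolding complete_def
      by (metis (no_types, lifting))
  qed
  define g where "g x = lim (\<lambda>k. f k x)" for x
  have gl: "(\<lambda>k. f k x) \<longlonglongrightarrow> g x" and gY: "g x \<in> Y" if xX: "x \<in> X" for x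
  proof -
    obtain l where l: "l \<in> Y" "(\<lambda>k. f k x) \<longlonglongrightarrow> l" using conv[OF xX] by blast
    then have "g x = l" unfolding g_def by (simp add: limI)
    then show "(\<lambda>k. f k x) \<longlonglongrightarrow> g x" "g x \<in> Y" using l by auto
  qed
  have gd: "dist (f k x) (g x) \<le> 2 * (1/2::real)^k" if x: "x \<in> X" for x k
  proof -
    have "(\<lambda>m. f (m + k) x) \<longlonglongrightarrow> g x"
      using LIMSEQ_ignore_initial_segment[OF gl[OF x], of k] by simp
    then have "(\<lambda>m. dist (f k x) (f (m + k) x)) \<longlonglongrightarrow> dist (f k x) (g x)"
      by (intro tendsto_intros)
    moreover have "\<forall>m. dist (f k x) (f (m + k) x) \<le> 2 * (1/2::real)^k"
      using bd[OF x, of k] by (simp add: add.commute)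
    ultimately show ?thesis
      using LIMSEQ_le_const2 by blast
  qed
  have ul: "uniform_limit X f g sequentially"
  proof (rule uniform_limitI)
    fix e :: real assume "e > 0"
    then obtain M where M: "2 * (1/2::real)^M < e" using small by blast
    show "\<forall>\<^sub>F n in sequentially. \<forall>x\<in>X. dist (f n x) (g x) < e"
      unfolding eventually_sequentially
    proof (intro exI[of _ M] allI impI ballI)
      fix n x assume "M \<le> n" "x \<in> X"
      then show "dist (f n x) (g x) < e"
        using gd[of x n] pmono[of M n] M by linarith
    qed
  qed
  have gc: "continuous_on X g"
    by (rule uniform_limit_theorem[OF _ ul]) (auto simp: fc)
  have "Y \<subseteq> closure (g ` X)"
  proof
    fix y assume y: "y \<in> Y"
    show "y \<in> closure (g ` X)"
      unfolding closure_approachable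
    proof (intro allI impI)
      fix e :: real assume "e > 0"
      then obtain M where M: "2 * (1/2::real)^M < e/2" using small[of "e/2"] by auto
      obtain x where x: "x \<in> X" "dist (f M x) y \<le> (1/2::real)^M" using dense[OF y] by blast
      have "dist (g x) y \<le> dist (f M x) (g x) + dist (f M x) y"
        by (rule dist_triangle3)
      moreover have "0 \<le> (1/2::real)^M" by simp
      ultimately have "dist (g x) y < e" using gd[OF x(1), of M] x(2) M
        by linarith
      then show "\<exists>z\<in>g ` X. dist z y < e" using x by blast
    qed
  qed
  moreover have "closed (g ` X)"
    using compact_continuous_image[OF gc X] by (rule compact_imp_closed)
  ultimately have "Y \<subseteq> g ` X" by simp
  moreover have "g ` X \<subseteq> Y" using gY by blast
  ultimately show ?thesis using gc by blast
qed




definition pstage :: "'a::metric_space set \<Rightarrow> 'a set \<Rightarrow> 'a set \<Rightarrow> ('a set \<times> 'a set) set \<Rightarrow> bool" where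
  "pstage K X Y S \<longleftrightarrow> finite S \<and> (\<forall>a\<in>S. clo K (fst a) \<and> fst a \<noteq> {} \<and> snd a \<noteq> {} \<and> snd a \<subseteq> Y)
     \<and> (\<forall>a\<in>S. \<forall>b\<in>S. fst a \<inter> fst b \<noteq> {} \<longrightarrow> a = b) \<and> \<Union>(fst ` S) = X \<and> \<Union>(snd ` S) = Y"

definition small :: "real \<Rightarrow> ('a::metric_space set \<times> 'a set) set \<Rightarrow> bool" where
  "small r S \<longleftrightarrow> (\<forall>a\<in>S. \<forall>y\<in>snd a. \<forall>z\<in>snd a. dist y z \<le> r)"

definition refines :: "('a set \<times> 'a set) set \<Rightarrow> ('a set \<times> 'a set) set \<Rightarrow> bool" where
  "refines S' S \<longleftrightarrow> (\<forall>a\<in>S'. \<exists>b\<in>S. fst a \<subseteq> fst b \<and> snd a \<subseteq> snd b)"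

lemma local_refine:
  fixes K :: "'a::metric_space set"
  assumes K: "compact K" "totally_disconnected_set K" "perfect_set K"
    and P: "clo K P" "P \<noteq> {}" and Q: "Q \<noteq> {}" "Q \<subseteq> Y" and Y: "compact Y" and r: "r > 0"
  shows "\<exists>N. finite N \<and> (\<forall>a\<in>N. clo K (fst a) \<and> fst a \<noteq> {} \<and> snd a \<noteq> {} \<and> fst a \<subseteq> P \<and> snd a \<subseteq> Q
      \<and> (\<forall>y\<in>snd a. \<forall>z\<in>snd a. dist y z \<le> r)) \<and> (\<forall>a\<in>N. \<forall>b\<in>N. fst a \<inter> fst b \<noteq> {} \<longrightarrow> a = b)
      \<and> \<Union>(fst ` N) = P \<and> \<Union>(snd ` N) = Q"
proof -
  have "Y \<subseteq> (\<Union>y\<in>Y. ball y (r/4))" using r by auto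
  then obtain F where F: "F \<subseteq> Y" "finite F" "Y \<subseteq> (\<Union>y\<in>F. ball y (r/4))"
    using compactE_image[OF Y, of Y "\<lambda>y. ball y (r/4)"] by blast
  define R where "R = (\<lambda>y. Q \<inter> ball y (r/4)) ` F - {{}}"
  have fR: "finite R" using F unfolding R_def by auto
  have UR: "\<Union>R = Q"
  proof
    show "\<Union>R \<subseteq> Q" unfolding R_def by auto
    show "Q \<subseteq> \<Union>R"
    proof
      fix q assume q: "q \<in> Q"
      then obtain y where "y \<in> F" "q \<in> ball y (r/4)" using F(3) Q(2) by blast
      then show "q \<in> \<Union>R" unfolding R_def using q by blast
    qed
  qed
  have Rne: "\<forall>A\<in>R. A \<noteq> {}" unfolding R_def by auto
  have Rsm: "\<forall>A\<in>R. \<forall>y\<in>A. \<forall>z\<in>A. dist y z \<le> r"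
  proof (intro ballI)
    fix A y z assume "A \<in> R" "y \<in> A" "z \<in> A"
    then obtain w where "y \<in> ball w (r/4)" "z \<in> ball w (r/4)" unfolding R_def by blast
    then have "dist w y < r/4" "dist w z < r/4" by auto
    then show "dist y z \<le> r" using dist_triangle[of y z w] dist_commute[of y w] r by linarith
  qed
  have "R \<noteq> {}" using UR Q by auto
  then have cR: "card R > 0" using fR by (simp add: card_gt_0_iff)
  obtain h where h: "bij_betw h {0..<card R} R" using ex_bij_betw_nat_finite[OF fR] by blast
  have hR: "h ` {..<card R} = R" using h by (simp add: bij_betw_def atLeast0LessThan)
  obtain c where c: "\<forall>i<card R. clo K (c i) \<and> c i \<noteq> {}"
    "\<forall>i<card R. \<forall>j<card R. i \<noteq> j \<longrightarrow> c i \<inter> c j = {}" "(\<Union>i<card R. c i) = P"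
    using split_n[OF K P cR] by blast
  define N where "N = (\<lambda>i. (c i, h i)) ` {..<card R}"
  have "finite N" unfolding N_def by simp
  moreover have "\<forall>a\<in>N. clo K (fst a) \<and> fst a \<noteq> {} \<and> snd a \<noteq> {} \<and> fst a \<subseteq> P \<and> snd a \<subseteq> Q
      \<and> (\<forall>y\<in>snd a. \<forall>z\<in>snd a. dist y z \<le> r)"
  proof
    fix a assume "a \<in> N"
    then obtain i where i: "i < card R" "a = (c i, h i)" unfolding N_def by blast
    have hi: "h i \<in> R" using hR i(1) by blast
    show "clo K (fst a) \<and> fst a \<noteq> {} \<and> snd a \<noteq> {} \<and> fst a \<subseteq> P \<and> snd a \<subseteq> Q
      \<and> (\<forall>y\<in>snd a. \<forall>z\<in>snd a. dist y z \<le> r)"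
      using c(1) i hi Rne Rsm UR c(3) by auto
  qed
  moreover have "\<forall>a\<in>N. \<forall>b\<in>N. fst a \<inter> fst b \<noteq> {} \<longrightarrow> a = b"
    unfolding N_def using c(2) by auto
  moreover have "\<Union>(fst ` N) = P" unfolding N_def using c(3) by (simp add: image_image)
  moreover have "\<Union>(snd ` N) = Q" unfolding N_def using UR hR by (simp add: image_image)
  ultimately show ?thesis by blast
qed

lemma refine_step:
  fixes K :: "'a::metric_space set"
  assumes K: "compact K" "totally_disconnected_set K" "perfect_set K"
    and S: "pstage K X Y S" and Y: "compact Y" and r: "r > 0"
  shows "\<exists>S'. pstage K X Y S' \<and> small r S' \<and> refines S' S"
proof -
  let ?NP = "\<lambda>a N. finite N \<and> (\<forall>b\<in>N. clo K (fst b) \<and> fst b \<noteq> {} \<and> snd b \<noteq> {} \<and> fst b \<subseteq> fst a \<and> snd b \<subseteq> snd a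
      \<and> (\<forall>y\<in>snd b. \<forall>z\<in>snd b. dist y z \<le> r)) \<and> (\<forall>b\<in>N. \<forall>b'\<in>N. fst b \<inter> fst b' \<noteq> {} \<longrightarrow> b = b')
      \<and> \<Union>(fst ` N) = fst a \<and> \<Union>(snd ` N) = snd a"
  have "\<forall>a\<in>S. \<exists>N. ?NP a N"
  proof
    fix a assume a: "a \<in> S"
    then have h: "clo K (fst a)" "fst a \<noteq> {}" "snd a \<noteq> {}" "snd a \<subseteq> Y"
      using S unfolding pstage_def by auto
    show "\<exists>N. ?NP a N" by (rule local_refine[OF K h Y r])
  qed
  from bchoice[OF this] obtain NN where NN0: "\<forall>a\<in>S. ?NP a (NN a)" ..
  have NN: "?NP a (NN a)" if "a \<in> S" for a by (rule bspec[OF NN0 that])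
  define S' where "S' = \<Union>(NN ` S)"
  have Sp: "finite S" "\<forall>a\<in>S. clo K (fst a) \<and> fst a \<noteq> {} \<and> snd a \<noteq> {} \<and> snd a \<subseteq> Y"
     "\<forall>a\<in>S. \<forall>b\<in>S. fst a \<inter> fst b \<noteq> {} \<longrightarrow> a = b" "\<Union>(fst ` S) = X" "\<Union>(snd ` S) = Y"
    using S unfolding pstage_def by auto
  have NNf: "finite (NN a)" if "a \<in> S" for a using NN[OF that] by (elim conjE)
  have NNb: "clo K (fst b) \<and> fst b \<noteq> {} \<and> snd b \<noteq> {} \<and> fst b \<subseteq> fst a \<and> snd b \<subseteq> snd a
      \<and> (\<forall>y\<in>snd b. \<forall>z\<in>snd b. dist y z \<le> r)" if "a \<in> S" "b \<in> NN a" for a b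
  proof -
    have "\<forall>b\<in>NN a. clo K (fst b) \<and> fst b \<noteq> {} \<and> snd b \<noteq> {} \<and> fst b \<subseteq> fst a \<and> snd b \<subseteq> snd a
      \<and> (\<forall>y\<in>snd b. \<forall>z\<in>snd b. dist y z \<le> r)" using NN[OF that(1)] by (elim conjE)
    then show ?thesis using that(2) by (rule bspec)
  qed
  have NNd: "\<forall>b\<in>NN a. \<forall>b'\<in>NN a. fst b \<inter> fst b' \<noteq> {} \<longrightarrow> b = b'" if "a \<in> S" for a
    using NN[OF that] by (elim conjE)
  have NNu1: "\<Union>(fst ` NN a) = fst a" if "a \<in> S" for a using NN[OF that] by (elim conjE)
  have NNu2: "\<Union>(snd ` NN a) = snd a" if "a \<in> S" for a using NN[OF that] by (elim conjE)
  have Sa: "clo K (fst a) \<and> fst a \<noteq> {} \<and> snd a \<noteq> {} \<and> snd a \<subseteq> Y" if "a \<in> S" for a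
    using Sp(2) that by (rule bspec)
  have "finite S'" unfolding S'_def using Sp(1) NNf by auto
  moreover have "\<forall>b\<in>S'. clo K (fst b) \<and> fst b \<noteq> {} \<and> snd b \<noteq> {} \<and> snd b \<subseteq> Y"
  proof
    fix b assume "b \<in> S'"
    then obtain a where a: "a \<in> S" "b \<in> NN a" unfolding S'_def by blast
    have "snd a \<subseteq> Y" using Sa[OF a(1)] by simp
    then show "clo K (fst b) \<and> fst b \<noteq> {} \<and> snd b \<noteq> {} \<and> snd b \<subseteq> Y"
      using NNb[OF a] by blast
  qed
  moreover have "\<forall>b\<in>S'. \<forall>b'\<in>S'. fst b \<inter> fst b' \<noteq> {} \<longrightarrow> b = b'"
  proof (intro ballI impI)
    fix b b' assume "b \<in> S'" "b' \<in> S'" and ne: "fst b \<inter> fst b' \<noteq> {}"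
    then obtain a a' where a: "a \<in> S" "b \<in> NN a" and a': "a' \<in> S" "b' \<in> NN a'" unfolding S'_def by blast
    have "fst b \<subseteq> fst a" "fst b' \<subseteq> fst a'" using NNb[OF a] NNb[OF a'] by blast+
    then have "fst a \<inter> fst a' \<noteq> {}" using ne by blast
    then have "a = a'" using Sp(3) a(1) a'(1) by blast
    then show "b = b'" using NNd[OF a(1)] a(2) a'(2) ne by blast
  qed
  moreover have "\<Union>(fst ` S') = X"
  proof -
    have "\<Union>(fst ` S') = (\<Union>a\<in>S. \<Union>(fst ` NN a))" unfolding S'_def by auto
    also have "\<dots> = (\<Union>a\<in>S. fst a)" using NNu1 by simp
    finally show ?thesis using Sp(4) by simp
  qed
  moreover have "\<Union>(snd ` S') = Y"
  proof -
    have "\<Union>(snd ` S') = (\<Union>a\<in>S. \<Union>(snd ` NN a))" unfolding S'_def by auto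
    also have "\<dots> = (\<Union>a\<in>S. snd a)" using NNu2 by simp
    finally show ?thesis using Sp(5) by simp
  qed
  moreover have "small r S'"
    unfolding small_def S'_def using NNb by blast
  moreover have "refines S' S"
    unfolding refines_def S'_def using NNb by blast
  ultimately show ?thesis unfolding pstage_def by blast
qed

definition fm :: "('a set \<times> 'a set) set \<Rightarrow> 'a \<Rightarrow> 'a" where
  "fm S x = (SOME y. y \<in> snd (THE a. a \<in> S \<and> x \<in> fst a))"

lemma fm_eq:
  assumes "pstage K X Y S" "a \<in> S" "x \<in> fst a"
  shows "fm S x = (SOME y. y \<in> snd a)"
proof -
  have "(THE a. a \<in> S \<and> x \<in> fst a) = a"
  proof (rule the_equality)
    show "a \<in> S \<and> x \<in> fst a" using assms by blast
    fix b assume "b \<in> S \<and> x \<in> fst b"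
    then show "b = a" using assms unfolding pstage_def by blast
  qed
  then show ?thesis unfolding fm_def by simp
qed

lemma fm_in:
  assumes "pstage K X Y S" "a \<in> S" "x \<in> fst a"
  shows "fm S x \<in> snd a"
proof -
  have "snd a \<noteq> {}" using assms unfolding pstage_def by blast
  then show ?thesis using fm_eq[OF assms] by (simp add: some_in_eq)
qed

lemma fm_cont:
  assumes S: "pstage K X Y S" and K: "closed K"
  shows "continuous_on X (fm S)"
proof -
  have X: "X = (\<Union>a\<in>S. fst a)" using S unfolding pstage_def by auto
  have "continuous_on (\<Union>a\<in>S. fst a) (fm S)"
  proof (rule continuous_on_closed_Union)
    show "finite S" using S unfolding pstage_def by auto
    fix a assume a: "a \<in> S"
    then show "closed (fst a)" using S K clo_closed unfolding pstage_def by blast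
    have "continuous_on (fst a) (\<lambda>x. (SOME y. y \<in> snd a))" by (rule continuous_on_const)
    then show "continuous_on (fst a) (fm S)"
      using fm_eq[OF S a] continuous_on_cong by (metis (no_types, lifting))
  qed
  then show ?thesis using X by simp
qed

primrec st :: "'a::metric_space set \<Rightarrow> 'a set \<Rightarrow> 'a set \<Rightarrow> nat \<Rightarrow> ('a set \<times> 'a set) set" where
  "st K X Y 0 = (SOME S. pstage K X Y S \<and> small 1 S)"
| "st K X Y (Suc k) = (SOME S'. pstage K X Y S' \<and> small ((1/2)^Suc k) S' \<and> refines S' (st K X Y k))"

lemma surj_exists:
  fixes K X Y :: "'a::metric_space set"
  assumes K: "compact K" "totally_disconnected_set K" "perfect_set K"
    and X: "clo K X" "X \<noteq> {}" and Y: "compact Y" "Y \<noteq> {}"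
  shows "\<exists>g. continuous_on X g \<and> g ` X = Y"
proof -
  have p0: "pstage K X Y {(X, Y)}" using X Y unfolding pstage_def by auto
  have stp: "pstage K X Y (st K X Y k) \<and> small ((1/2)^k) (st K X Y k)" for k
  proof (induction k)
    case 0
    have ex: "\<exists>S. pstage K X Y S \<and> small 1 S"
      using refine_step[OF K p0 Y(1), of 1] by auto
    show ?case using someI_ex[OF ex] by simp
  next
    case (Suc k)
    have ex: "\<exists>S'. pstage K X Y S' \<and> small ((1/2)^Suc k) S' \<and> refines S' (st K X Y k)"
      using refine_step[OF K _ Y(1)] Suc by simp
    show ?case using someI_ex[OF ex] by simp
  qed
  have ref: "refines (st K X Y (Suc k)) (st K X Y k)" for k
  proof -
    have ex: "\<exists>S'. pstage K X Y S' \<and> small ((1/2)^Suc k) S' \<and> refines S' (st K X Y k)"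
      using refine_step[OF K _ Y(1)] stp[of k] by simp
    show ?thesis using someI_ex[OF ex] by simp
  qed
  have pst: "pstage K X Y (st K X Y k)" for k using stp[of k] by blast
  have pA: "clo K (fst a) \<and> fst a \<noteq> {} \<and> snd a \<noteq> {} \<and> snd a \<subseteq> Y" if "a \<in> st K X Y k" for a k
  proof -
    have "\<forall>a\<in>st K X Y k. clo K (fst a) \<and> fst a \<noteq> {} \<and> snd a \<noteq> {} \<and> snd a \<subseteq> Y"
      using pst[of k] unfolding pstage_def by (elim conjE)
    then show ?thesis using that by (rule bspec)
  qed
  have pu1: "\<Union>(fst ` st K X Y k) = X" for k using pst[of k] unfolding pstage_def by (elim conjE)
  have pu2: "\<Union>(snd ` st K X Y k) = Y" for k using pst[of k] unfolding pstage_def by (elim conjE)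
  have psm: "dist y z \<le> (1/2)^k" if "a \<in> st K X Y k" "y \<in> snd a" "z \<in> snd a" for a k y z
    using stp[of k] that unfolding small_def by blast
  have cov: "\<exists>a\<in>st K X Y k. x \<in> fst a" if "x \<in> X" for x k
    using pu1[of k] that by blast
  have "closed X" using clo_closed[OF X(1)] compact_imp_closed[OF K(1)] by blast
  then have Xc: "compact X" using compact_Int_closed[OF K(1)] clo_sub[OF X(1)] by (metis inf.absorb_iff2)
  show ?thesis
  proof (rule uniform_limit_surj[OF Xc Y(1), of "\<lambda>k. fm (st K X Y k)"])
    fix k x assume x: "x \<in> X"
    then obtain a where a: "a \<in> st K X Y k" "x \<in> fst a" using cov by blast
    have "snd a \<subseteq> Y" using pA[OF a(1)] by blast
    then show "fm (st K X Y k) x \<in> Y" using fm_in[OF pst a] by blast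
  next
    fix k show "continuous_on X (fm (st K X Y k))"
      using fm_cont[OF pst compact_imp_closed[OF K(1)]] by blast
  next
    fix k x assume x: "x \<in> X"
    then obtain a where a: "a \<in> st K X Y (Suc k)" "x \<in> fst a" using cov by blast
    obtain b where b: "b \<in> st K X Y k" "fst a \<subseteq> fst b" "snd a \<subseteq> snd b"
      using ref[of k] a(1) unfolding refines_def by blast
    have "fm (st K X Y (Suc k)) x \<in> snd b" using fm_in[OF pst a] b(3) by blast
    moreover have "fm (st K X Y k) x \<in> snd b" using fm_in[OF pst b(1)] b(2) a(2) by blast
    ultimately show "dist (fm (st K X Y k) x) (fm (st K X Y (Suc k)) x) \<le> (1/2)^k"
      using psm[OF b(1)] by blast
  next
    fix k y assume y: "y \<in> Y"
    then obtain a where a: "a \<in> st K X Y k" "y \<in> snd a"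
      using pu2[of k] by blast
    obtain x where x: "x \<in> fst a" using pA[OF a(1)] by blast
    have "x \<in> X" using pu1[of k] a(1) x by blast
    moreover have "fm (st K X Y k) x \<in> snd a" using fm_in[OF pst a(1) x] by blast
    ultimately show "\<exists>x\<in>X. dist (fm (st K X Y k) x) y \<le> (1/2)^k"
      using psm[OF a(1)] a(2) by blast
  qed
qed




lemma decomp_fin:
  fixes K :: "'a::metric_space set" and I :: "'i set"
  assumes K: "compact K" "totally_disconnected_set K" "perfect_set K"
    and U: "clo K U" "U \<noteq> {}" and I: "finite I" "I \<noteq> {}"
  shows "\<exists>c. (\<forall>i\<in>I. clo K (c i) \<and> c i \<noteq> {} \<and> c i \<subseteq> U) \<and> (\<forall>i\<in>I. \<forall>j\<in>I. i \<noteq> j \<longrightarrow> c i \<inter> c j = {})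
    \<and> (\<Union>i\<in>I. c i) = U"
proof -
  obtain g where g: "bij_betw g I {0..<card I}" using ex_bij_betw_finite_nat[OF I(1)] by blast
  have cI: "card I > 0" using I by (simp add: card_gt_0_iff)
  obtain d where d: "\<forall>i<card I. clo K (d i) \<and> d i \<noteq> {}"
    "\<forall>i<card I. \<forall>j<card I. i \<noteq> j \<longrightarrow> d i \<inter> d j = {}" "(\<Union>i<card I. d i) = U"
    using split_n[OF K U cI] by blast
  have gI: "g ` I = {..<card I}" using g by (simp add: bij_betw_def atLeast0LessThan)
  have ginj: "inj_on g I" using g by (simp add: bij_betw_def)
  have "(\<Union>i\<in>I. d (g i)) = (\<Union>m\<in>g ` I. d m)" by simp
  also have "\<dots> = U" using gI d(3) by simp
  finally have u: "(\<Union>i\<in>I. d (g i)) = U" .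
  have "\<forall>i\<in>I. clo K (d (g i)) \<and> d (g i) \<noteq> {} \<and> d (g i) \<subseteq> U"
  proof
    fix i assume i: "i \<in> I"
    then have "g i < card I" using gI by blast
    then show "clo K (d (g i)) \<and> d (g i) \<noteq> {} \<and> d (g i) \<subseteq> U" using d(1) u i by blast
  qed
  moreover have "\<forall>i\<in>I. \<forall>j\<in>I. i \<noteq> j \<longrightarrow> d (g i) \<inter> d (g j) = {}"
  proof (intro ballI impI)
    fix i j assume "i \<in> I" "j \<in> I" "i \<noteq> j"
    then have "g i \<noteq> g j" "g i < card I" "g j < card I" using ginj gI by (auto simp: inj_on_def)
    then show "d (g i) \<inter> d (g j) = {}" using d(2) by blast
  qed
  ultimately show ?thesis using u by (intro exI[of _ "\<lambda>i. d (g i)"]) blast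
qed

lemma shrink_step:
  fixes K :: "'a::metric_space set"
  assumes K: "compact K" "totally_disconnected_set K" "perfect_set K"
    and V: "clo K V" "a \<in> V" and r: "r > 0"
  shows "\<exists>C. clo K C \<and> a \<in> C \<and> C \<subseteq> V \<inter> ball a r \<and> C \<noteq> V"
proof -
  obtain W where W: "open W" "V = K \<inter> W" using V unfolding clo_def by (auto simp: openin_open)
  have aK: "a \<in> K" "a \<in> W" using V W by auto
  have "a islimpt K" using K(3) aK unfolding perfect_set_def by blast
  then obtain b where b: "b \<in> K" "b \<in> W \<inter> ball a r" "b \<noteq> a"
    using W(1) aK(2) r unfolding islimpt_def by (meson centre_in_ball open_Int open_ball IntI)
  obtain C where C: "openin (top_of_set K) C" "closedin (top_of_set K) C" "a \<in> C" "C \<subseteq> W \<inter> ball a r - {b}"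
    using clopen_nbhd[OF K(1,2) aK(1), of "W \<inter> ball a r - {b}"] W(1) aK r b(3)
    by (auto intro!: open_Diff)
  have "C \<subseteq> K" using C(1) by (simp add: openin_imp_subset)
  then have "C \<subseteq> V \<inter> ball a r" "b \<notin> C" "b \<in> V" using C W b by auto
  then show ?thesis using C by (intro exI[of _ C]) (auto simp: clo_def)
qed

primrec nest :: "'a::metric_space set \<Rightarrow> 'a \<Rightarrow> 'a set \<Rightarrow> nat \<Rightarrow> 'a set" where
  "nest K a U 0 = U"
| "nest K a U (Suc m) = (SOME C. clo K C \<and> a \<in> C \<and> C \<subseteq> nest K a U m \<inter> ball a (inverse (real (Suc m))) \<and> C \<noteq> nest K a U m)"

lemma first_exit:
  fixes f :: "nat \<Rightarrow> 'a set"
  shows "x \<in> f 0 \<Longrightarrow> x \<notin> f n \<Longrightarrow> \<exists>k<n. x \<in> f k - f (Suc k)"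
  by (induction n) (auto simp: less_Suc_eq)

lemma decomp_inf:
  fixes K :: "'a::metric_space set" and I :: "'i set"
  assumes K: "compact K" "totally_disconnected_set K" "perfect_set K"
    and U: "clo K U" "U \<noteq> {}" and I: "countable I" "infinite I"
  shows "\<exists>a c. a \<in> U \<and> (\<forall>i\<in>I. clo K (c i) \<and> c i \<noteq> {} \<and> c i \<subseteq> U \<and> a \<notin> c i)
    \<and> (\<forall>i\<in>I. \<forall>j\<in>I. i \<noteq> j \<longrightarrow> c i \<inter> c j = {}) \<and> U - {a} \<subseteq> (\<Union>i\<in>I. c i)
    \<and> (\<forall>e>0. finite {i\<in>I. \<not> c i \<subseteq> ball a e})"
proof -
  obtain a where a: "a \<in> U" using U by blast
  obtain e :: "'i \<Rightarrow> nat" where e: "bij_betw e I UNIV" using countableE_infinite[OF I] by blast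
  let ?N = "nest K a U"
  have N: "clo K (?N m) \<and> a \<in> ?N m" for m
  proof (induction m)
    case 0 then show ?case using U a by simp
  next
    case (Suc m)
    have ex: "\<exists>C. clo K C \<and> a \<in> C \<and> C \<subseteq> ?N m \<inter> ball a (inverse (real (Suc m))) \<and> C \<noteq> ?N m"
      using shrink_step[OF K, of "?N m" a "inverse (real (Suc m))"] Suc by simp
    show ?case using someI_ex[OF ex] by simp
  qed
  have NS: "?N (Suc m) \<subseteq> ?N m \<inter> ball a (inverse (real (Suc m))) \<and> ?N (Suc m) \<noteq> ?N m" for m
  proof -
    have ex: "\<exists>C. clo K C \<and> a \<in> C \<and> C \<subseteq> ?N m \<inter> ball a (inverse (real (Suc m))) \<and> C \<noteq> ?N m"
      using shrink_step[OF K, of "?N m" a "inverse (real (Suc m))"] N[of m] by simp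
    show ?thesis using someI_ex[OF ex] by simp
  qed
  have dec: "?N n \<subseteq> ?N m" if "m \<le> n" for m n
    using lift_Suc_antimono_le[of ?N, OF _ that] NS by blast
  define D where "D m = ?N m - ?N (Suc m)" for m
  define c where "c i = D (e i)" for i
  have Dp: "clo K (D m) \<and> D m \<noteq> {} \<and> D m \<subseteq> U \<and> a \<notin> D m" for m
  proof -
    have "clo K (D m)" unfolding D_def using N[of m] N[of "Suc m"] by (intro clo_Diff) blast+
    moreover have "D m \<noteq> {}" unfolding D_def using NS[of m] by blast
    moreover have "D m \<subseteq> U" unfolding D_def using dec[of 0 m] by auto
    moreover have "a \<notin> D m" unfolding D_def using N[of "Suc m"] by blast
    ultimately show ?thesis by blast
  qed
  have Ddisj: "D m \<inter> D n = {}" if "m < n" for m n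
  proof -
    have "D n \<subseteq> ?N (Suc m)" unfolding D_def using dec[of "Suc m" n] that by auto
    then show ?thesis unfolding D_def by blast
  qed
  have Dball: "D m \<subseteq> ball a (inverse (real m))" if m0: "m > 0" for m
  proof -
    obtain k where k: "m = Suc k" using m0 by (cases m) auto
    have "D m \<subseteq> ?N m" unfolding D_def by blast
    also have "\<dots> \<subseteq> ball a (inverse (real m))" using NS[of k] k by blast
    finally show ?thesis .
  qed
  have einj: "inj_on e I" and esurj: "e ` I = UNIV" using e by (auto simp: bij_betw_def)
  have "\<forall>i\<in>I. clo K (c i) \<and> c i \<noteq> {} \<and> c i \<subseteq> U \<and> a \<notin> c i"
    unfolding c_def using Dp by blast
  moreover have "\<forall>i\<in>I. \<forall>j\<in>I. i \<noteq> j \<longrightarrow> c i \<inter> c j = {}"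
  proof (intro ballI impI)
    fix i j assume "i \<in> I" "j \<in> I" "i \<noteq> j"
    then have "e i \<noteq> e j" using einj by (auto simp: inj_on_def)
    then show "c i \<inter> c j = {}" unfolding c_def using Ddisj
      by (metis inf_commute linorder_neqE_nat)
  qed
  moreover have "U - {a} \<subseteq> (\<Union>i\<in>I. c i)"
  proof
    fix x assume x: "x \<in> U - {a}"
    then have "dist a x > 0" by auto
    then obtain n where n: "inverse (real (Suc n)) < dist a x" using reals_Archimedean by blast
    have "x \<notin> ?N (Suc n)" using NS[of n] n by auto
    moreover have "x \<in> ?N 0" using x by simp
    ultimately obtain k where "x \<in> ?N k - ?N (Suc k)" using first_exit[of x ?N "Suc n"] by blast
    then have "x \<in> D k" unfolding D_def by simp
    moreover obtain i where "i \<in> I" "e i = k" using esurj by (metis UNIV_I imageE)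
    ultimately show "x \<in> (\<Union>i\<in>I. c i)" unfolding c_def by blast
  qed
  moreover have "\<forall>r>0. finite {i\<in>I. \<not> c i \<subseteq> ball a r}"
  proof (intro allI impI)
    fix r :: real assume "r > 0"
    then obtain M where M: "inverse (real (Suc M)) < r" using reals_Archimedean by blast
    have "{i\<in>I. \<not> c i \<subseteq> ball a r} \<subseteq> e -` {..Suc M} \<inter> I"
    proof
      fix i assume i: "i \<in> {i\<in>I. \<not> c i \<subseteq> ball a r}"
      have "e i \<le> Suc M"
      proof (rule ccontr)
        assume "\<not> e i \<le> Suc M"
        then have "inverse (real (e i)) \<le> inverse (real (Suc M))"
          by (intro le_imp_inverse_le) auto
        then have "ball a (inverse (real (e i))) \<subseteq> ball a r" using M by auto
        moreover have "c i \<subseteq> ball a (inverse (real (e i)))" unfolding c_def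
          using Dball[of "e i"] \<open>\<not> e i \<le> Suc M\<close> by simp
        ultimately show False using i by blast
      qed
      then show "i \<in> e -` {..Suc M} \<inter> I" using i by simp
    qed
    moreover have "finite (e -` {..Suc M} \<inter> I)" by (rule finite_vimage_IntI[OF _ einj]) simp
    ultimately show "finite {i\<in>I. \<not> c i \<subseteq> ball a r}" by (rule finite_subset)
  qed
  ultimately show ?thesis using a by blast
qed




lemma pigeon:
  fixes f :: "nat \<Rightarrow> 'b"
  assumes F: "finite F" and fi: "\<And>i. i \<le> card F \<Longrightarrow> f i \<in> F"
  shows "\<exists>a b. a < b \<and> b \<le> card F \<and> f a = f b"
proof (rule ccontr)
  assume ne: "\<not> ?thesis"
  have "inj_on f {..card F}"
  proof (rule inj_onI)
    fix a b assume ab: "a \<in> {..card F}" "b \<in> {..card F}" "f a = f b"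
    show "a = b"
    proof (rule ccontr)
      assume "a \<noteq> b"
      then have "a < b \<or> b < a" by arith
      then show False using ne ab by (metis atMost_iff)
    qed
  qed
  moreover have "f ` {..card F} \<subseteq> F" using fi by auto
  ultimately have "card {..card F} \<le> card F" using card_inj_on_le F by blast
  then show False by simp
qed

lemma fp_of_finite:
  assumes F: "finite F" and fF: "\<And>y. y \<in> F \<Longrightarrow> f y \<in> F" and m: "(f ^^ m) x \<in> F"
  shows "finally_periodic f x"
proof -
  have inF: "(f ^^ (m + i)) x \<in> F" for i
  proof (induction i)
    case 0 then show ?case using m by simp
  next
    case (Suc i)
    have "(f ^^ (m + Suc i)) x = f ((f ^^ (m + i)) x)" by simp
    then show ?case using fF[OF Suc] by simp
  qed
  obtain a b where ab: "a < b" "(f ^^ (m + a)) x = (f ^^ (m + b)) x"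
    using pigeon[OF F, of "\<lambda>i. (f ^^ (m + i)) x"] inF by blast
  have "(f ^^ ((b - a) + (m + a + 1))) x = f ((f ^^ (m + b)) x)"
  proof -
    have "(b - a) + (m + a + 1) = Suc (m + b)" using ab(1) by simp
    then show ?thesis by (simp add: add.commute)
  qed
  also have "\<dots> = f ((f ^^ (m + a)) x)" using ab(2) by simp
  also have "\<dots> = (f ^^ (m + a + 1)) x" by simp
  finally show ?thesis unfolding finally_periodic_def
    using ab(1) by (intro exI[of _ "m + a + 1"] exI[of _ "b - a"]) simp
qed

lemma iter_lt:
  assumes p: "\<And>j. j < n \<Longrightarrow> p j < (n::nat)" and j: "j < n"
  shows "(p ^^ k) j < n"
  by (induction k) (auto simp: p j)

lemma eventually_cyc:
  assumes p: "\<And>j. j < n \<Longrightarrow> p j < (n::nat)" and j: "j < n" and k: "n \<le> k"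
  shows "\<exists>m>0. (p ^^ m) ((p ^^ k) j) = (p ^^ k) j"
proof -
  have "finite {..<n}" by simp
  moreover have "\<And>i. i \<le> card {..<n} \<Longrightarrow> (p ^^ i) j \<in> {..<n}"
    using iter_lt[OF p j] by auto
  ultimately obtain a b where ab: "a < b" "b \<le> n" "(p ^^ a) j = (p ^^ b) j"
    using pigeon[of "{..<n}" "\<lambda>i. (p ^^ i) j"] by auto
  define t where "t = k - a"
  have kt: "k = t + a" using ab k unfolding t_def by simp
  have "(p ^^ (b - a)) ((p ^^ k) j) = (p ^^ ((b - a) + k)) j" by (simp add: funpow_add)
  also have "(b - a) + k = t + b" using kt ab(1) by simp
  also have "(p ^^ (t + b)) j = (p ^^ t) ((p ^^ b) j)" by (simp add: funpow_add)
  also have "\<dots> = (p ^^ t) ((p ^^ a) j)" using ab(3) by simp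
  also have "\<dots> = (p ^^ k) j" using kt by (simp add: funpow_add)
  finally show ?thesis using ab(1) by (intro exI[of _ "b - a"]) simp
qed

lemma per_mult:
  assumes "(p ^^ m) w = w"
  shows "(p ^^ (m * t)) w = w"
proof (induction t)
  case 0 then show ?case by simp
next
  case (Suc t)
  have "(p ^^ (m * Suc t)) w = (p ^^ m) ((p ^^ (m * t)) w)" by (simp add: funpow_add)
  then show ?case using Suc assms by simp
qed




lemma assembly:
  fixes K :: "'a::metric_space set" and U :: "nat \<Rightarrow> 'a set" and E :: "nat \<Rightarrow> nat \<Rightarrow> bool"
  assumes K: "compact K" "totally_disconnected_set K" "perfect_set K"
    and U: "\<And>i. i < n \<Longrightarrow> clo K (U i) \<and> U i \<noteq> {}"
    and Ud: "\<And>i j. i < n \<Longrightarrow> j < n \<Longrightarrow> i \<noteq> j \<Longrightarrow> U i \<inter> U j = {}"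
    and Uc: "(\<Union>i<n. U i) = K"
    and Ein: "\<And>j. j < n \<Longrightarrow> \<exists>i<n. E i j" and Eout: "\<And>i. i < n \<Longrightarrow> \<exists>j<n. E i j"
  shows "\<exists>T'. continuous_on K T' \<and> T' ` K = K \<and> (\<forall>x\<in>K. \<exists>i<n. \<exists>j<n. x \<in> U i \<and> T' x \<in> U j \<and> E i j)
     \<and> (\<forall>x\<in>K. finally_periodic T' x)"
proof -
  define p where "p j = (SOME i. i < n \<and> E i j)" for j
  have p: "p j < n \<and> E (p j) j" if "j < n" for j
    unfolding p_def using someI_ex[OF Ein[OF that]] .
  have plt: "\<And>j. j < n \<Longrightarrow> p j < n" using p by blast
  define s where "s i = (SOME j. j < n \<and> E i j)" for i
  have s: "s i < n \<and> E i (s i)" if "i < n" for i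
    unfolding s_def using someI_ex[OF Eout[OF that]] .
  define R where "R = {v. v < n \<and> (\<exists>m>0. (p ^^ m) v = v)}"
  have R2: "(p ^^ k) j \<in> R" if "j < n" "n \<le> k" for j k
    using eventually_cyc[of n p, OF plt that] iter_lt[of n p, OF plt that(1)] unfolding R_def by blast
  have R3: "p v \<in> R" if vR: "v \<in> R" for v
  proof -
    obtain m where m: "m > 0" "(p ^^ m) v = v" "v < n" using vR unfolding R_def by blast
    have "(p ^^ m) (p v) = p ((p ^^ m) v)" by (simp add: funpow_swap1)
    then have "(p ^^ m) (p v) = p v" using m(2) by simp
    moreover have "p v < n" using plt m(3) by blast
    ultimately show ?thesis using m(1) unfolding R_def by blast
  qed
  have R3': "(p ^^ t) v \<in> R" if "v \<in> R" for v t
    by (induction t) (auto simp: that R3)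
  have Rinj: "w1 = w2" if hw: "w1 \<in> R" "w2 \<in> R" "p w1 = p w2" for w1 w2
  proof -
    obtain m1 where m1: "m1 > 0" "(p ^^ m1) w1 = w1" using hw(1) unfolding R_def by blast
    obtain m2 where m2: "m2 > 0" "(p ^^ m2) w2 = w2" using hw(2) unfolding R_def by blast
    have e1: "(p ^^ (m1 * m2)) w1 = w1" using per_mult[OF m1(2)] .
    have e2: "(p ^^ (m1 * m2)) w2 = w2" using per_mult[OF m2(2), of m1] by (simp add: mult.commute)
    obtain M where M: "m1 * m2 = Suc M" using m1(1) m2(1) by (metis gr0_conv_Suc nat_0_less_mult_iff)
    have "w1 = (p ^^ M) (p w1)" using e1 M by (metis funpow_Suc_right o_apply)
    also have "\<dots> = (p ^^ M) (p w2)" using hw(3) by simp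
    also have "\<dots> = w2" using e2 M by (metis funpow_Suc_right o_apply)
    finally show ?thesis .
  qed
  have Rsurj: "\<exists>w\<in>R. p w = v" if vR: "v \<in> R" for v
  proof -
    obtain m where m: "m > 0" "(p ^^ m) v = v" using vR unfolding R_def by blast
    obtain m' where m': "m = Suc m'" using m(1) by (metis gr0_conv_Suc)
    have "p ((p ^^ m') v) = v" using m m' by simp
    then show ?thesis using R3'[OF vR, of m'] by blast
  qed
  define \<iota> where "\<iota> v = (THE w. w \<in> R \<and> p w = v)" for v
  have \<iota>: "\<iota> v \<in> R \<and> p (\<iota> v) = v" if "v \<in> R" for v
  proof -
    have "\<exists>!w. w \<in> R \<and> p w = v" using Rsurj[OF that] Rinj by blast
    then show ?thesis unfolding \<iota>_def by (rule theI')
  qed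
  have \<iota>u: "\<iota> v = w" if "w \<in> R" "p w = v" for v w
  proof -
    have "v \<in> R" using R3[OF that(1)] that(2) by simp
    then show ?thesis using \<iota>[of v] Rinj that by blast
  qed
  have R6: "\<iota> ((p ^^ Suc k) j) = (p ^^ k) j" if "j < n" "n \<le> k" for j k
    using \<iota>u[OF R2[OF that]] by simp
  have Rn: "v < n" if "v \<in> R" for v using that unfolding R_def by blast
  define I where "I v = {(j, k). j < n \<and> (p ^^ k) j = v}" for v
  have Iinf: "infinite (I v)" if vR: "v \<in> R" for v
  proof
    assume fin: "finite (I v)"
    obtain m where m: "m > 0" "(p ^^ m) v = v" "v < n" using vR unfolding R_def by blast
    have "range (\<lambda>t. (v, m * t)) \<subseteq> I v" unfolding I_def using per_mult[OF m(2)] m(3) by auto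
    moreover have "inj (\<lambda>t::nat. (v, m * t))" using m(1) by (auto simp: inj_def)
    ultimately show False using fin by (meson finite_subset range_inj_infinite)
  qed
  have Ifin: "finite (I v)" if "v < n" "v \<notin> R" for v
  proof -
    have "I v \<subseteq> {..<n} \<times> {..<n}"
    proof
      fix jk assume "jk \<in> I v"
      then obtain j k where jk: "jk = (j, k)" "j < n" "(p ^^ k) j = v" unfolding I_def by blast
      have "k < n" using R2[OF jk(2), of k] jk(3) that(2) by (meson not_le)
      then show "jk \<in> {..<n} \<times> {..<n}" using jk by simp
    qed
    then show ?thesis by (rule finite_subset) simp
  qed
  have Ine: "(v, 0) \<in> I v" if "v < n" for v
    using that unfolding I_def by simp
  define good where "good v a c \<longleftrightarrow> (\<forall>i\<in>I v. clo K (c i) \<and> c i \<noteq> {} \<and> c i \<subseteq> U v)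
     \<and> (\<forall>i\<in>I v. \<forall>i'\<in>I v. i \<noteq> i' \<longrightarrow> c i \<inter> c i' = {})
     \<and> (v \<in> R \<longrightarrow> a \<in> U v \<and> (\<forall>i\<in>I v. a \<notin> c i) \<and> U v - {a} \<subseteq> (\<Union>i\<in>I v. c i)
           \<and> (\<forall>e>0. finite {i\<in>I v. \<not> c i \<subseteq> ball a e}))
     \<and> (v \<notin> R \<longrightarrow> (\<Union>i\<in>I v. c i) = U v)" for v and a :: 'a and c
  have "\<exists>ac. good v (fst ac) (snd ac)" if v: "v < n" for v
  proof (cases "v \<in> R")
    case True
    have uv: "clo K (U v)" "U v \<noteq> {}" using U[OF v] by auto
    have ic: "countable (I v)" by (rule countableI_type)
    from decomp_inf[OF K uv ic Iinf[OF True]] obtain a c where ac: "a \<in> U v" "\<forall>i\<in>I v. clo K (c i) \<and> c i \<noteq> {} \<and> c i \<subseteq> U v \<and> a \<notin> c i"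
      "\<forall>i\<in>I v. \<forall>j\<in>I v. i \<noteq> j \<longrightarrow> c i \<inter> c j = {}" "U v - {a} \<subseteq> (\<Union>i\<in>I v. c i)"
      "\<forall>e>0. finite {i\<in>I v. \<not> c i \<subseteq> ball a e}"
      apply (elim exE conjE) apply (rule that) apply assumption+ done
    have "good v a c" unfolding good_def using ac True by simp
    then show ?thesis by (intro exI[of _ "(a, c)"]) simp
  next
    case False
    have uv: "clo K (U v)" "U v \<noteq> {}" using U[OF v] by auto
    have ne: "I v \<noteq> {}" using Ine[OF v] by blast
    from decomp_fin[OF K uv Ifin[OF v False] ne] obtain c where c: "\<forall>i\<in>I v. clo K (c i) \<and> c i \<noteq> {} \<and> c i \<subseteq> U v"
      "\<forall>i\<in>I v. \<forall>j\<in>I v. i \<noteq> j \<longrightarrow> c i \<inter> c j = {}" "(\<Union>i\<in>I v. c i) = U v"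
      apply (elim exE conjE) apply (rule that) apply assumption+ done
    have "good v undefined c" unfolding good_def using c False by simp
    then show ?thesis by (intro exI[of _ "(undefined, c)"]) simp
  qed
  then have "\<forall>v\<in>{..<n}. \<exists>ac. good v (fst ac) (snd ac)" by blast
  from bchoice[OF this] obtain AC where AC: "\<forall>v\<in>{..<n}. good v (fst (AC v)) (snd (AC v))" ..
  define Aa where "Aa v = fst (AC v)" for v
  define Cc where "Cc v = snd (AC v)" for v
  have G: "good v (Aa v) (Cc v)" if "v < n" for v using AC that unfolding Aa_def Cc_def by blast
  have Ga: "\<forall>i\<in>I v. clo K (Cc v i) \<and> Cc v i \<noteq> {} \<and> Cc v i \<subseteq> U v" if "v < n" for v
    using G[OF that] unfolding good_def by (elim conjE)
  have Gb: "\<forall>i\<in>I v. \<forall>i'\<in>I v. i \<noteq> i' \<longrightarrow> Cc v i \<inter> Cc v i' = {}" if "v < n" for v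
    using G[OF that] unfolding good_def by (elim conjE)
  have Gc: "Aa v \<in> U v \<and> (\<forall>i\<in>I v. Aa v \<notin> Cc v i) \<and> U v - {Aa v} \<subseteq> (\<Union>i\<in>I v. Cc v i)
           \<and> (\<forall>e>0. finite {i\<in>I v. \<not> Cc v i \<subseteq> ball (Aa v) e})" if vR: "v \<in> R" for v
  proof -
    have "v \<in> R \<longrightarrow> Aa v \<in> U v \<and> (\<forall>i\<in>I v. Aa v \<notin> Cc v i) \<and> U v - {Aa v} \<subseteq> (\<Union>i\<in>I v. Cc v i)
           \<and> (\<forall>e>0. finite {i\<in>I v. \<not> Cc v i \<subseteq> ball (Aa v) e})"
      using G[OF Rn[OF vR]] unfolding good_def by (elim conjE)
    then show ?thesis using vR by (rule mp)
  qed
  have G7: "(\<Union>i\<in>I v. Cc v i) = U v" if "v < n" "v \<notin> R" for v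
  proof -
    have "v \<notin> R \<longrightarrow> (\<Union>i\<in>I v. Cc v i) = U v"
      using G[OF that(1)] unfolding good_def by (elim conjE)
    then show ?thesis using that(2) by (rule mp)
  qed
  have G1: "clo K (Cc v i) \<and> Cc v i \<noteq> {} \<and> Cc v i \<subseteq> U v" if "v < n" "i \<in> I v" for v i
    using Ga[OF that(1)] that(2) by (rule bspec)
  have G2: "Cc v i \<inter> Cc v i' = {}" if "v < n" "i \<in> I v" "i' \<in> I v" "i \<noteq> i'" for v i i'
    using Gb[OF that(1)] that(2-4) by blast
  have G3: "Aa v \<in> U v" if "v \<in> R" for v
    using Gc[OF that] by (elim conjE)
  have G4: "Aa v \<notin> Cc v i" if "v \<in> R" "i \<in> I v" for v i
    using Gc[OF that(1)] that(2) by blast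
  have G5: "U v - {Aa v} \<subseteq> (\<Union>i\<in>I v. Cc v i)" if "v \<in> R" for v
    using Gc[OF that] by (elim conjE)
  have G6: "finite {i\<in>I v. \<not> Cc v i \<subseteq> ball (Aa v) e}" if "v \<in> R" "e > 0" for v e
    using Gc[OF that(1)] that(2) by blast
  define cell where "cell j k = Cc ((p ^^ k) j) (j, k)" for j k
  have inI: "(j, k) \<in> I ((p ^^ k) j)" if "j < n" for j k using that unfolding I_def by simp
  have cellp: "clo K (cell j k) \<and> cell j k \<noteq> {} \<and> cell j k \<subseteq> U ((p ^^ k) j)" if "j < n" for j k
    unfolding cell_def using G1[OF iter_lt[of n p, OF plt that] inI[OF that]] .
  have celld: "cell j k \<inter> cell j' k' = {}" if "j < n" "j' < n" "(j, k) \<noteq> (j', k')" for j k j' k'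
  proof (cases "(p ^^ k) j = (p ^^ k') j'")
    case True
    have jk': "(j', k') \<in> I ((p ^^ k) j)" using True inI[OF that(2)] by simp
    show ?thesis unfolding cell_def True[symmetric]
      by (rule G2[OF iter_lt[of n p, OF plt that(1)] inI[OF that(1)] jk' that(3)])
  next
    case False
    then show ?thesis using cellp[OF that(1)] cellp[OF that(2)] Ud[OF iter_lt[of n p, OF plt that(1)] iter_lt[of n p, OF plt that(2)] False]
      by blast
  qed
  have anc_notin: "Aa v \<notin> cell j k" if "v \<in> R" "j < n" for v j k
  proof (cases "(p ^^ k) j = v")
    case True
    have "(j, k) \<in> I v" using inI[OF that(2), of k] True by simp
    then show ?thesis unfolding cell_def True by (rule G4[OF that(1)])
  next
    case False
    then show ?thesis using cellp[OF that(2)] G3[OF that(1)] Ud[OF iter_lt[of n p, OF plt that(2)] Rn[OF that(1)] False]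
      by blast
  qed
  have cover: "(\<exists>v\<in>R. x = Aa v) \<or> (\<exists>j<n. \<exists>k. x \<in> cell j k)" if x: "x \<in> K" for x
  proof -
    obtain v where v: "v < n" "x \<in> U v" using x Uc by blast
    have cI: "\<exists>j<n. \<exists>k. x \<in> cell j k" if xU: "x \<in> (\<Union>i\<in>I v. Cc v i)"
    proof -
      obtain jk where jk: "jk \<in> I v" "x \<in> Cc v jk" using xU by blast
      obtain j k where jk2: "jk = (j, k)" by (cases jk)
      have "j < n" "(p ^^ k) j = v" using jk(1) jk2 unfolding I_def by auto
      then show ?thesis unfolding cell_def using jk(2) jk2 by blast
    qed
    show ?thesis
    proof (cases "v \<in> R")
      case True
      then show ?thesis using G5[OF True] v cI by blast
    next
      case False
      then show ?thesis using G7[OF v(1) False] v cI by blast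
    qed
  qed
  have anc_inj: "v = w" if vw: "v \<in> R" "w \<in> R" "Aa v = Aa w" for v w
  proof (rule ccontr)
    assume "v \<noteq> w"
    then have "U v \<inter> U w = {}" using Ud[OF Rn[OF vw(1)] Rn[OF vw(2)]] by blast
    then show False using G3[OF vw(1)] G3[OF vw(2)] vw(3) by auto
  qed
  have cellK: "cell j k \<subseteq> K" if "j < n" for j k using cellp[OF that] by (auto dest: clo_sub)
  have cellc: "compact (cell j k)" if "j < n" for j k
  proof -
    have "closed (cell j k)" using cellp[OF that] clo_closed[OF _ compact_imp_closed[OF K(1)]] by blast
    then show ?thesis using compact_Int_closed[OF K(1)] cellK[OF that] by (metis inf.absorb_iff2)
  qed
  define e where "e v = (SOME x. x \<in> cell v 0)" for v
  have e_in: "e v \<in> cell v 0" if "v < n" for v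
  proof -
    have "cell v 0 \<noteq> {}" using cellp[OF that, of 0] by blast
    then show ?thesis unfolding e_def by (simp add: some_in_eq)
  qed
  have gex: "\<exists>h. continuous_on (cell j (Suc k)) h \<and> h ` cell j (Suc k) = cell j k" if "j < n" for j k
  proof -
    have a: "clo K (cell j (Suc k))" "cell j (Suc k) \<noteq> {}" using cellp[OF that, of "Suc k"] by auto
    have b: "compact (cell j k)" "cell j k \<noteq> {}" using cellc[OF that, of k] cellp[OF that, of k] by auto
    show ?thesis by (rule surj_exists[OF K a b])
  qed
  define g where "g j k = (SOME h. continuous_on (cell j (Suc k)) h \<and> h ` cell j (Suc k) = cell j k)" for j k
  have gp: "continuous_on (cell j (Suc k)) (g j k) \<and> g j k ` cell j (Suc k) = cell j k" if "j < n" for j k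
    unfolding g_def using someI_ex[OF gex[OF that]] .
  define Idx where "Idx = {..<n} \<times> (UNIV :: nat set)"
  define T' where "T' x = (if \<exists>jk\<in>Idx. x \<in> cell (fst jk) (snd jk)
      then (let jk = (SOME jk. jk \<in> Idx \<and> x \<in> cell (fst jk) (snd jk)) in
            if snd jk = 0 then e (s (fst jk)) else g (fst jk) (snd jk - 1) x)
      else Aa (\<iota> (SOME v. v \<in> R \<and> x = Aa v)))" for x
  have selc: "(SOME jk. jk \<in> Idx \<and> x \<in> cell (fst jk) (snd jk)) = (j, k)" if jx: "j < n" "x \<in> cell j k" for x j k
  proof (rule some_equality)
    show "(j, k) \<in> Idx \<and> x \<in> cell (fst (j, k)) (snd (j, k))" using jx unfolding Idx_def by simp
    fix jk assume jk: "jk \<in> Idx \<and> x \<in> cell (fst jk) (snd jk)"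
    show "jk = (j, k)"
    proof (rule ccontr)
      assume ne: "jk \<noteq> (j, k)"
      obtain j' k' where jk2: "jk = (j', k')" by (cases jk)
      have "j' < n" using jk jk2 unfolding Idx_def by auto
      then have "cell j' k' \<inter> cell j k = {}" using celld[of j' j k' k] ne jx(1) jk2 by auto
      then show False using jk jk2 jx(2) by auto
    qed
  qed
  have T1: "T' x = g j k x" if jx: "j < n" "x \<in> cell j (Suc k)" for x j k
  proof -
    have "\<exists>jk\<in>Idx. x \<in> cell (fst jk) (snd jk)" using jx unfolding Idx_def by force
    then show ?thesis unfolding T'_def using selc[OF jx] by simp
  qed
  have T2: "T' x = e (s j)" if jx: "j < n" "x \<in> cell j 0" for x j
  proof -
    have "\<exists>jk\<in>Idx. x \<in> cell (fst jk) (snd jk)" using jx unfolding Idx_def by force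
    then show ?thesis unfolding T'_def using selc[OF jx] by simp
  qed
  have T3: "T' (Aa v) = Aa (\<iota> v)" if vR: "v \<in> R" for v
  proof -
    have "\<not> (\<exists>jk\<in>Idx. Aa v \<in> cell (fst jk) (snd jk))" using anc_notin[OF vR] unfolding Idx_def by auto
    moreover have "(SOME w. w \<in> R \<and> Aa v = Aa w) = v"
      by (rule some_equality) (use vR anc_inj in auto)
    ultimately show ?thesis unfolding T'_def by simp
  qed
  have gcell: "g j k x \<in> cell j k" if "j < n" "x \<in> cell j (Suc k)" for j k x
    using gp[OF that(1), of k] that(2) by blast
  have edge: "\<exists>i<n. \<exists>j<n. x \<in> U i \<and> T' x \<in> U j \<and> E i j" if x: "x \<in> K" for x
  proof (cases "\<exists>v\<in>R. x = Aa v")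
    case True
    then obtain v where v: "v \<in> R" "x = Aa v" by blast
    have w: "\<iota> v \<in> R" "p (\<iota> v) = v" using \<iota>[OF v(1)] by auto
    have "E v (\<iota> v)" using p[OF Rn[OF w(1)]] w(2) by simp
    moreover have "x \<in> U v" using G3[OF v(1)] v(2) by simp
    moreover have "T' x \<in> U (\<iota> v)" using T3[OF v(1)] G3[OF w(1)] v(2) by simp
    ultimately show ?thesis using Rn[OF v(1)] Rn[OF w(1)] by blast
  next
    case False
    then obtain j k where jk: "j < n" "x \<in> cell j k" using cover[OF x] by blast
    show ?thesis
    proof (cases k)
      case 0
      have "T' x \<in> cell (s j) 0" using T2[OF jk(1)] jk(2) 0 e_in s[OF jk(1)] by simp
      then have "T' x \<in> U (s j)" using cellp[OF conjunct1[OF s[OF jk(1)]], of 0] by auto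
      moreover have "x \<in> U j" using cellp[OF jk(1), of 0] jk(2) 0 by auto
      ultimately show ?thesis using s[OF jk(1)] jk(1) by blast
    next
      case (Suc k')
      have "T' x \<in> cell j k'" using T1[OF jk(1)] gcell[OF jk(1)] jk(2) Suc by simp
      then have "T' x \<in> U ((p ^^ k') j)" using cellp[OF jk(1), of k'] by blast
      moreover have "x \<in> U (p ((p ^^ k') j))" using cellp[OF jk(1), of k] jk(2) Suc by auto
      moreover have "E (p ((p ^^ k') j)) ((p ^^ k') j)" using p[OF iter_lt[of n p, OF plt jk(1)]] by blast
      moreover have "(p ^^ k') j < n" "p ((p ^^ k') j) < n" using iter_lt[of n p, OF plt jk(1)] plt by auto
      ultimately show ?thesis by blast
    qed
  qed
  have T'K: "T' x \<in> K" if "x \<in> K" for x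
    using edge[OF that] Uc by blast
  have surj: "T' ` K = K"
  proof
    show "T' ` K \<subseteq> K" using T'K by blast
    show "K \<subseteq> T' ` K"
    proof
      fix y assume y: "y \<in> K"
      show "y \<in> T' ` K"
      proof (cases "\<exists>v\<in>R. y = Aa v")
        case True
        then obtain v where v: "v \<in> R" "y = Aa v" by blast
        have pv: "p v \<in> R" using R3[OF v(1)] .
        have "\<iota> (p v) = v" using \<iota>u[OF v(1) refl] .
        then have "T' (Aa (p v)) = y" using T3[OF pv] v(2) by simp
        moreover have "Aa (p v) \<in> K" using G3[OF pv] U[OF Rn[OF pv]] by (auto dest: clo_sub)
        ultimately show ?thesis by blast
      next
        case False
        then obtain j k where jk: "j < n" "y \<in> cell j k" using cover[OF y] by blast
        have "y \<in> g j k ` cell j (Suc k)" using gp[OF jk(1), of k] jk(2) by simp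
        then obtain x where x: "x \<in> cell j (Suc k)" "g j k x = y" by (auto elim!: imageE)
        then have "T' x = y" using T1[OF jk(1)] by simp
        moreover have "x \<in> K" using cellK[OF jk(1)] x(1) by blast
        ultimately show ?thesis by blast
      qed
    qed
  qed
  define F where "F = e ` {..<n} \<union> Aa ` R"
  have Ffin: "finite F" unfolding F_def using Rn by (auto intro: finite_subset[of R "{..<n}"])
  have fF: "T' y \<in> F" if "y \<in> F" for y
  proof -
    { fix v assume v: "v < n" "y = e v"
      have "T' y = e (s v)" using T2[OF v(1)] e_in[OF v(1)] v(2) by simp
      then have ?thesis unfolding F_def using s[OF v(1)] by auto }
    moreover
    { fix v assume v: "v \<in> R" "y = Aa v"
      have "T' y = Aa (\<iota> v)" using T3[OF v(1)] v(2) by simp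
      then have ?thesis unfolding F_def using \<iota>[OF v(1)] by auto }
    ultimately show ?thesis using that unfolding F_def by blast
  qed
  have reach: "x \<in> cell j k \<Longrightarrow> (T' ^^ Suc k) x = e (s j)" if j: "j < n" for j k x
  proof (induction k arbitrary: x)
    case 0
    then show ?case using T2[OF j] by simp
  next
    case (Suc k)
    have "T' x \<in> cell j k" using T1[OF j Suc.prems] gcell[OF j Suc.prems] by simp
    then have "(T' ^^ Suc k) (T' x) = e (s j)" by (rule Suc.IH)
    then show ?case by (simp add: funpow_Suc_right del: funpow.simps)
  qed
  have fp: "finally_periodic T' x" if x: "x \<in> K" for x
  proof (cases "\<exists>v\<in>R. x = Aa v")
    case True
    then have h: "(T' ^^ 0) x \<in> F" unfolding F_def by auto
    show ?thesis by (rule fp_of_finite[of F T' 0 x]) (use Ffin fF h in auto)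
  next
    case False
    then obtain j k where jk: "j < n" "x \<in> cell j k" using cover[OF x] by blast
    have h: "(T' ^^ Suc k) x \<in> F" using reach[OF jk] s[OF jk(1)] unfolding F_def by auto
    show ?thesis by (rule fp_of_finite[of F T' "Suc k" x]) (use Ffin fF h in auto)
  qed
  have cont: "continuous_on K T'"
    unfolding continuous_on_iff
  proof (intro ballI allI impI)
    fix x and e :: real assume x: "x \<in> K" and e: "e > 0"
    show "\<exists>d>0. \<forall>x'\<in>K. dist x' x < d \<longrightarrow> dist (T' x') (T' x) < e"
    proof (cases "\<exists>v\<in>R. x = Aa v")
      case False
      then obtain j k where jk: "j < n" "x \<in> cell j k" using cover[OF x] by blast
      obtain W where W: "open W" "cell j k = K \<inter> W"
        using cellp[OF jk(1), of k] unfolding clo_def by (auto simp: openin_open)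
      have xW: "x \<in> W" using W(2) jk(2) by blast
      obtain d1 where d1: "d1 > 0" "ball x d1 \<subseteq> W" using openE[OF W(1) xW] by blast
      have loc: "x' \<in> cell j k" if "x' \<in> K" "dist x' x < d1" for x'
      proof -
        have "x' \<in> ball x d1" using that(2) by (simp add: dist_commute)
        then show ?thesis using that(1) d1(2) W(2) by blast
      qed
      show ?thesis
      proof (cases k)
        case 0
        have "\<forall>x'\<in>K. dist x' x < d1 \<longrightarrow> dist (T' x') (T' x) < e"
        proof (intro ballI impI)
          fix x' assume "x' \<in> K" "dist x' x < d1"
          then have "x' \<in> cell j 0" using loc 0 by simp
          then show "dist (T' x') (T' x) < e" using T2[OF jk(1)] jk(2) 0 e by simp
        qed
        then show ?thesis using d1(1) by blast
      next
        case (Suc k')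
        have "continuous_on (cell j (Suc k')) (g j k')" using gp[OF jk(1)] by blast
        then obtain d2 where d2: "d2 > 0" "\<forall>x'\<in>cell j (Suc k'). dist x' x < d2 \<longrightarrow> dist (g j k' x') (g j k' x) < e"
          unfolding continuous_on_iff using jk(2) Suc e by blast
        have "\<forall>x'\<in>K. dist x' x < min d1 d2 \<longrightarrow> dist (T' x') (T' x) < e"
        proof (intro ballI impI)
          fix x' assume x': "x' \<in> K" "dist x' x < min d1 d2"
          then have "x' \<in> cell j (Suc k')" using loc Suc by simp
          moreover have "x \<in> cell j (Suc k')" using jk(2) Suc by simp
          ultimately show "dist (T' x') (T' x) < e" using T1[OF jk(1)] d2(2) x'(2) by simp
        qed
        then show ?thesis using d1(1) d2(1) by (intro exI[of _ "min d1 d2"]) simp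
      qed
    next
      case True
      then obtain v where v: "v \<in> R" "x = Aa v" by blast
      define w where "w = \<iota> v"
      have w: "w \<in> R" "p w = v" using \<iota>[OF v(1)] unfolding w_def by auto
      define B1 where "B1 = {jk \<in> I v. snd jk \<le> n}"
      define B2 where "B2 = {jk \<in> I v. n < snd jk \<and> \<not> cell (fst jk) (snd jk - 1) \<subseteq> ball (Aa w) e}"
      have fB1: "finite B1"
      proof -
        have "B1 \<subseteq> {..<n} \<times> {..n}" unfolding B1_def I_def by auto
        then show ?thesis by (rule finite_subset) simp
      qed
      have fB2: "finite B2"
      proof -
        have "B2 \<subseteq> (\<lambda>jk. (fst jk, Suc (snd jk))) ` {i\<in>I w. \<not> Cc w i \<subseteq> ball (Aa w) e}"
        proof
          fix jk assume jk: "jk \<in> B2"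
          obtain j k where jk2: "jk = (j, k)" by (cases jk)
          have hj: "j < n" "(p ^^ k) j = v" "n < k" "\<not> cell j (k - 1) \<subseteq> ball (Aa w) e"
            using jk jk2 unfolding B2_def I_def by auto
          obtain k' where k': "k = Suc k'" using hj(3) by (cases k) auto
          have "(p ^^ k') j = w" using R6[OF hj(1), of k'] hj(2,3) k' unfolding w_def by simp
          then have "(j, k') \<in> I w" "cell j k' = Cc w (j, k')" using hj(1) unfolding I_def cell_def by auto
          then show "jk \<in> (\<lambda>jk. (fst jk, Suc (snd jk))) ` {i\<in>I w. \<not> Cc w i \<subseteq> ball (Aa w) e}"
            using hj(4) jk2 k' by (auto intro!: image_eqI[of _ _ "(j, k')"])
        qed
        moreover have "finite {i\<in>I w. \<not> Cc w i \<subseteq> ball (Aa w) e}" using G6[OF w(1) e] .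
        ultimately show ?thesis using finite_subset by blast
      qed
      define Z where "Z = (\<Union>jk\<in>B1 \<union> B2. cell (fst jk) (snd jk))"
      have Bn: "fst jk < n" if "jk \<in> B1 \<union> B2" for jk using that unfolding B1_def B2_def I_def by auto
      have cl: "\<forall>jk\<in>B1 \<union> B2. closed (cell (fst jk) (snd jk))"
      proof
        fix jk assume jk: "jk \<in> B1 \<union> B2"
        show "closed (cell (fst jk) (snd jk))"
          using cellp[OF Bn[OF jk]] clo_closed[OF _ compact_imp_closed[OF K(1)]] by blast
      qed
      have "closed Z" unfolding Z_def using fB1 fB2 cl by (intro closed_UN) auto
      have xZ: "x \<notin> Z" unfolding Z_def using anc_notin[OF v(1) Bn] v(2) by fastforce
      obtain Wv where Wv: "open Wv" "U v = K \<inter> Wv"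
        using U[OF Rn[OF v(1)]] unfolding clo_def by (auto simp: openin_open)
      have "x \<in> Wv - Z" using G3[OF v(1)] v(2) Wv xZ by blast
      moreover have "open (Wv - Z)" using Wv(1) \<open>closed Z\<close> by (rule open_Diff)
      ultimately obtain d where d: "d > 0" "ball x d \<subseteq> Wv - Z" using openE by metis
      have "\<forall>x'\<in>K. dist x' x < d \<longrightarrow> dist (T' x') (T' x) < e"
      proof (intro ballI impI)
        fix x' assume x': "x' \<in> K" "dist x' x < d"
        have "x' \<in> ball x d" using x'(2) by (simp add: dist_commute)
        then have x'b: "x' \<in> Wv - Z" using d(2) by blast
        then have x'U: "x' \<in> U v" using Wv x'(1) by blast
        show "dist (T' x') (T' x) < e"
        proof (cases "x' = x")
          case True then show ?thesis using e by simp
        next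
          case False
          then have "x' \<in> U v - {Aa v}" using x'U v(2) by blast
          then obtain jk where jk: "jk \<in> I v" "x' \<in> Cc v jk" using G5[OF v(1)] by blast
          obtain j k where jk2: "jk = (j, k)" by (cases jk)
          have hj: "j < n" "(p ^^ k) j = v" using jk(1) jk2 unfolding I_def by auto
          have xc: "x' \<in> cell j k" using jk(2) jk2 hj unfolding cell_def by simp
          have "jk \<notin> B1 \<union> B2" using x'b xc jk2 unfolding Z_def by auto
          then have hk: "n < k" "cell j (k - 1) \<subseteq> ball (Aa w) e" using jk(1) jk2 unfolding B1_def B2_def by auto
          obtain k' where k': "k = Suc k'" using hk(1) by (cases k) auto
          have "T' x' = g j k' x'" using T1[OF hj(1)] xc k' by simp
          moreover have "g j k' x' \<in> cell j k'" using gcell[OF hj(1)] xc k' by simp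
          ultimately have "T' x' \<in> ball (Aa w) e" using hk(2) k' by auto
          moreover have "T' x = Aa w" using T3[OF v(1)] v(2) unfolding w_def by simp
          ultimately show ?thesis by (simp add: dist_commute)
        qed
      qed
      then show ?thesis using d(1) by blast
    qed
  qed
  show ?thesis using cont surj edge fp by blast
qed




theorem theorem1p1:
  fixes K :: "'a::metric_space set" and T :: "'a \<Rightarrow> 'a" and \<epsilon> :: real
  assumes "cantor_set K" and "endomorphism K T" and "\<epsilon> > 0"
  shows "\<exists>T'. endomorphism K T' \<and> (SUP x\<in>K. dist (T x) (T' x)) < \<epsilon>
              \<and> (\<forall>x\<in>K. finally_periodic T' x)"
proof -
  have K: "compact K" "totally_disconnected_set K" "perfect_set K" and Kne: "K \<noteq> {}"
    using assms(1) unfolding cantor_set_def by auto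
  have Tc: "continuous_on K T" and Ts: "T ` K = K" using assms(2) unfolding endomorphism_def by auto
  have eps: "\<epsilon> > 0" by fact
  have "uniformly_continuous_on K T" using compact_uniformly_continuous[OF Tc K(1)] .
  then obtain d0 where d0: "d0 > 0" "\<forall>x\<in>K. \<forall>x'\<in>K. dist x' x < d0 \<longrightarrow> dist (T x') (T x) < \<epsilon>/2"
    unfolding uniformly_continuous_on_def using eps by (meson half_gt_zero)
  define \<delta> where "\<delta> = min d0 (\<epsilon>/2)"
  have \<delta>: "\<delta> > 0" "\<delta> \<le> d0" "\<delta> \<le> \<epsilon>/2" using d0 eps unfolding \<delta>_def by auto
  obtain \<U> where PU: "finite \<U>" "\<Union>\<U> = K"
    "\<forall>U\<in>\<U>. clo K U \<and> U \<noteq> {} \<and> (\<forall>x\<in>U. \<forall>y\<in>U. dist x y < \<delta>)"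
    "\<forall>U\<in>\<U>. \<forall>V\<in>\<U>. U \<noteq> V \<longrightarrow> U \<inter> V = {}"
    using partition_small[OF K(1,2) \<delta>(1)] by blast
  define n where "n = card \<U>"
  obtain h where h: "bij_betw h {0..<n} \<U>" using ex_bij_betw_nat_finite[OF PU(1)] unfolding n_def by blast
  have hU: "h ` {..<n} = \<U>" and hinj: "inj_on h {..<n}" using h by (auto simp: bij_betw_def atLeast0LessThan)
  have U1: "clo K (h i) \<and> h i \<noteq> {}" if "i < n" for i using PU(3) hU that by blast
  have Usm: "dist x y < \<delta>" if "i < n" "x \<in> h i" "y \<in> h i" for i x y using PU(3) hU that by blast
  have Ud: "h i \<inter> h j = {}" if "i < n" "j < n" "i \<noteq> j" for i j
  proof -
    have "h i \<noteq> h j" using hinj that by (auto simp: inj_on_def)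
    then show ?thesis using PU(4) hU that by blast
  qed
  have Uc: "(\<Union>i<n. h i) = K" using PU(2) hU by simp
  define E where "E i j \<longleftrightarrow> T ` h i \<inter> h j \<noteq> {}" for i j
  have Ein: "\<exists>i<n. E i j" if jn: "j < n" for j
  proof -
    obtain y where y: "y \<in> h j" using U1[OF jn] by blast
    have "y \<in> (\<Union>i<n. h i)" using y jn by blast
    then have "y \<in> T ` K" using Uc Ts by simp
    then obtain x where x: "x \<in> K" "T x = y" by blast
    then have "x \<in> (\<Union>i<n. h i)" using Uc by simp
    then obtain i where "i < n" "x \<in> h i" by blast
    then show ?thesis unfolding E_def using x y by blast
  qed
  have Eout: "\<exists>j<n. E i j" if iN: "i < n" for i
  proof -
    obtain x where x: "x \<in> h i" using U1[OF iN] by blast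
    have "x \<in> (\<Union>i<n. h i)" using x iN by blast
    then have "T x \<in> T ` K" using Uc by simp
    then have "T x \<in> (\<Union>i<n. h i)" using Ts Uc by simp
    then obtain j where "j < n" "T x \<in> h j" by blast
    then show ?thesis unfolding E_def using x by blast
  qed
  obtain T' where T': "continuous_on K T'" "T' ` K = K"
    "\<forall>x\<in>K. \<exists>i<n. \<exists>j<n. x \<in> h i \<and> T' x \<in> h j \<and> E i j" "\<forall>x\<in>K. finally_periodic T' x"
    using assembly[OF K U1 Ud Uc Ein Eout] by blast
  have close: "dist (T x) (T' x) < \<epsilon>" if x: "x \<in> K" for x
  proof -
    obtain i j where ij: "i < n" "j < n" "x \<in> h i" "T' x \<in> h j" "E i j" using T'(3) x by blast
    then obtain z where z: "z \<in> h i" "T z \<in> h j" unfolding E_def by blast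
    have "z \<in> (\<Union>i<n. h i)" using z ij(1) by blast
    then have zK: "z \<in> K" using Uc by simp
    have "dist z x < d0" using Usm[OF ij(1) z(1) ij(3)] \<delta> by simp
    then have "dist (T z) (T x) < \<epsilon>/2" using d0(2) x zK by blast
    moreover have "dist (T z) (T' x) < \<epsilon>/2" using Usm[OF ij(2) z(2) ij(4)] \<delta> by simp
    moreover have "dist (T x) (T' x) \<le> dist (T z) (T x) + dist (T z) (T' x)" by (rule dist_triangle3)
    ultimately show ?thesis by linarith
  qed
  have "continuous_on K (\<lambda>x. dist (T x) (T' x))" using Tc T'(1) by (rule continuous_on_dist)
  then have "compact ((\<lambda>x. dist (T x) (T' x)) ` K)" using K(1) by (rule compact_continuous_image)
  moreover have "(\<lambda>x. dist (T x) (T' x)) ` K \<noteq> {}" using Kne by simp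
  ultimately obtain s where s: "s \<in> (\<lambda>x. dist (T x) (T' x)) ` K" "\<forall>t\<in>(\<lambda>x. dist (T x) (T' x)) ` K. t \<le> s"
    using compact_attains_sup by blast
  have "(SUP x\<in>K. dist (T x) (T' x)) = s" using s by (intro cSup_eq_maximum) auto
  moreover have "s < \<epsilon>" using s(1) close by blast
  ultimately have "(SUP x\<in>K. dist (T x) (T' x)) < \<epsilon>" by simp
  moreover have "endomorphism K T'" using T' unfolding endomorphism_def by blast
  ultimately show ?thesis using T'(4) by blast
qed


end
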